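(* Let $F:\mathbb{R}^n\to\mathbb{R}$ be smooth, $L=\{(q,\nabla F(q)):q\in\mathbb{R}^n\}\subset\mathbb{R}^{2n}$, and $\Psi:\mathbb{R}^n\times\mathbb{R}^n\to\mathbb{R}^{2n}$, $\Psi(q,w)=(q+w,\nabla F(q)+\nabla^2F(q)w)$. Then the set $\Delta$ of critical points of $\Psi$ is $$\Delta=\{(q,w)\in\mathbb{R}^n\times\mathbb{R}^n:\ \text{the linear map }\mathbb{R}^n\ni\zeta\mapsto\nabla^3F(q)[\zeta,w]\in\mathbb{R}^n\ \text{is singular}\}.$$ Consequently, a point $\Psi(q,w)$ belongs to the wall $\Sigma=\Psi(\Delta)$ if and only if the linear map $\zeta\mapsto\nabla^3F(q)[\zeta,w]$ does not have full rank.
   Context: $\nabla^2F(q)$ is the Hessian matrix, and $\nabla^3F(q)[v,\zeta]=\big(\sum_{i,j}F_{1ij}(q)v_i\zeta_j,\dots,\sum_{i,j}F_{nij}(q)v_i\zeta_j\big)$ with $F_{kij}=\partial^3F/\partial q_k\partial q_i\partial q_j$. $L$ is a Lagrangian submanifold of $\mathbb{R}^{2n}$ (standard symplectic form $\sum dp_i\wedge dq_i$), $\mathbb{R}^n\times\mathbb{R}^n$ is identified with $TL$ via $(q,w)\mapsto$ the tangent vector $(w,\nabla^2F(q)w)$ at $(q,\nabla F(q))$, and $\Psi$ corresponds to $(X,W)\mapsto X+W$. *)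

theory Defs
  imports "HOL-Analysis.Analysis"
begin

definition partial :: "'n::finite \<Rightarrow> (real^'n \<Rightarrow> real) \<Rightarrow> real^'n \<Rightarrow> real" where
  "partial i f x = deriv (\<lambda>t. f (x + t *\<^sub>R axis i 1)) 0"

definition iter_partial :: "'n::finite list \<Rightarrow> (real^'n \<Rightarrow> real) \<Rightarrow> real^'n \<Rightarrow> real" where
  "iter_partial is f = foldr partial is f"

definition smooth_fun :: "(real^'n::finite \<Rightarrow> real) \<Rightarrow> bool" where
  "smooth_fun f \<longleftrightarrow> (\<forall>is. iter_partial is f differentiable_on UNIV)"

definition grad :: "(real^'n::finite \<Rightarrow> real) \<Rightarrow> real^'n \<Rightarrow> real^'n" where
  "grad f q = (\<chi> i. partial i f q)"

definition hessian :: "(real^'n::finite \<Rightarrow> real) \<Rightarrow> real^'n \<Rightarrow> real^'n^'n" where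
  "hessian f q = (\<chi> i j. partial i (partial j f) q)"

definition third_deriv :: "(real^'n::finite \<Rightarrow> real) \<Rightarrow> real^'n \<Rightarrow> real^'n \<Rightarrow> real^'n \<Rightarrow> real^'n" where
  "third_deriv f q v \<zeta> = (\<chi> k. \<Sum>i\<in>UNIV. \<Sum>j\<in>UNIV. partial k (partial i (partial j f)) q * v $ i * \<zeta> $ j)"

definition Psi_map :: "(real^'n::finite \<Rightarrow> real) \<Rightarrow> (real^'n) \<times> (real^'n) \<Rightarrow> (real^'n) \<times> (real^'n)" where
  "Psi_map f = (\<lambda>(q, w). (q + w, grad f q + hessian f q *v w))"

definition critical_points :: "('a::euclidean_space \<Rightarrow> 'b::euclidean_space) \<Rightarrow> 'a set" where
  "critical_points g = {x. \<not> surj (frechet_derivative g (at x))}"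

end

theory Submission imports Defs begin

lemma dir_deriv:
  fixes f :: "real^'n \<Rightarrow> real"
  assumes "(f has_derivative f') (at (x + t *\<^sub>R v))"
  shows "((\<lambda>s. f (x + s *\<^sub>R v)) has_real_derivative f' v) (at t)"
proof -
  have l: "((\<lambda>s. x + s *\<^sub>R v) has_derivative (\<lambda>s. s *\<^sub>R v)) (at t)"
    by (auto intro!: derivative_eq_intros)
  have "((f \<circ> (\<lambda>s. x + s *\<^sub>R v)) has_derivative (f' \<circ> (\<lambda>s. s *\<^sub>R v))) (at t)"
    using diff_chain_at[OF l] assms by blast
  moreover have "(f' \<circ> (\<lambda>s. s *\<^sub>R v)) = (*) (f' v)"
    using has_derivative_linear[OF assms] by (auto simp: linear_scale o_def)
  ultimately show ?thesis by (simp add: has_field_derivative_def o_def)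
qed

lemma partial_eq:
  fixes f :: "real^'n \<Rightarrow> real"
  assumes "(f has_derivative f') (at x)"
  shows "partial i f x = f' (axis i 1)"
proof -
  have "((\<lambda>s. f (x + s *\<^sub>R axis i 1)) has_real_derivative f' (axis i 1)) (at 0)"
    by (rule dir_deriv) (use assms in simp)
  then show ?thesis unfolding partial_def by (rule DERIV_imp_deriv)
qed

lemma partial_DERIV:
  fixes f :: "real^'n \<Rightarrow> real"
  assumes "f differentiable at (y + s *\<^sub>R axis i 1)"
  shows "((\<lambda>s. f (y + s *\<^sub>R axis i 1)) has_real_derivative partial i f (y + s *\<^sub>R axis i 1)) (at s)"
proof -
  obtain f' where f': "(f has_derivative f') (at (y + s *\<^sub>R axis i 1))"
    using assms differentiable_def by blast
  show ?thesis using dir_deriv[OF f'] partial_eq[OF f'] by simp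
qed

lemma deriv_sum_form:
  fixes f :: "real^'n \<Rightarrow> real"
  assumes "(f has_derivative f') (at x)"
  shows "f' = (\<lambda>v. \<Sum>k\<in>UNIV. partial k f x * v $ k)"
proof
  fix v :: "real^'n"
  have lin: "linear f'" using has_derivative_linear[OF assms] .
  have "f' v = f' (\<Sum>k\<in>UNIV. v $ k *\<^sub>R axis k 1)"
    using basis_expansion[of v] by (simp add: scalar_mult_eq_scaleR)
  also have "\<dots> = (\<Sum>k\<in>UNIV. v $ k * f' (axis k 1))"
    by (simp add: linear_sum[OF lin] linear_scale[OF lin])
  finally show "f' v = (\<Sum>k\<in>UNIV. partial k f x * v $ k)"
    by (simp add: partial_eq[OF assms] mult.commute)
qed

lemma differentiable_sum_form:
  fixes f :: "real^'n \<Rightarrow> real"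
  assumes "f differentiable at x"
  shows "(f has_derivative (\<lambda>v. \<Sum>k\<in>UNIV. partial k f x * v $ k)) (at x)"
proof -
  obtain f' where f': "(f has_derivative f') (at x)" using assms differentiable_def by blast
  show ?thesis using f' deriv_sum_form[OF f'] by simp
qed


lemma mvt_mixed:
  fixes f :: "real^'n \<Rightarrow> real"
  assumes df: "\<And>y. f differentiable at y" and di: "\<And>y. partial i f differentiable at y"
    and h: "h > 0"
  shows "\<exists>\<sigma> \<tau>. 0 < \<sigma> \<and> \<sigma> < h \<and> 0 < \<tau> \<and> \<tau> < h \<and>
     f (x + h *\<^sub>R axis i 1 + h *\<^sub>R axis j 1) - f (x + h *\<^sub>R axis i 1) - f (x + h *\<^sub>R axis j 1) + f x
     = h * h * partial j (partial i f) (x + \<sigma> *\<^sub>R axis i 1 + \<tau> *\<^sub>R axis j 1)"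
proof -
  define e where "e = (axis i 1 :: real^'n)"
  define d where "d = (axis j 1 :: real^'n)"
  define \<phi> where "\<phi> = (\<lambda>s. f ((x + h *\<^sub>R d) + s *\<^sub>R e) - f (x + s *\<^sub>R e))"
  have "\<exists>z. 0 < z \<and> z < h \<and> \<phi> h - \<phi> 0 = (h - 0) *
      (partial i f ((x + h *\<^sub>R d) + z *\<^sub>R e) - partial i f (x + z *\<^sub>R e))"
    unfolding \<phi>_def e_def
    by (rule MVT2[OF h]) (intro DERIV_diff partial_DERIV df)
  then obtain \<sigma> where s: "0 < \<sigma>" "\<sigma> < h" and
    eq1: "\<phi> h - \<phi> 0 = h * (partial i f ((x + h *\<^sub>R d) + \<sigma> *\<^sub>R e) - partial i f (x + \<sigma> *\<^sub>R e))"
    by auto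
  define \<psi> where "\<psi> = (\<lambda>t. partial i f ((x + \<sigma> *\<^sub>R e) + t *\<^sub>R d))"
  have "\<exists>z. 0 < z \<and> z < h \<and> \<psi> h - \<psi> 0 = (h - 0) *
      partial j (partial i f) ((x + \<sigma> *\<^sub>R e) + z *\<^sub>R d)"
    unfolding \<psi>_def d_def
    by (rule MVT2[OF h]) (intro partial_DERIV di)
  then obtain \<tau> where t: "0 < \<tau>" "\<tau> < h" and
    eq2: "\<psi> h - \<psi> 0 = h * partial j (partial i f) ((x + \<sigma> *\<^sub>R e) + \<tau> *\<^sub>R d)"
    by auto
  have "\<psi> h - \<psi> 0 = partial i f ((x + h *\<^sub>R d) + \<sigma> *\<^sub>R e) - partial i f (x + \<sigma> *\<^sub>R e)"
    unfolding \<psi>_def by (simp add: algebra_simps)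
  moreover have "\<phi> h - \<phi> 0 = f (x + h *\<^sub>R e + h *\<^sub>R d) - f (x + h *\<^sub>R e) - f (x + h *\<^sub>R d) + f x"
    unfolding \<phi>_def by (simp add: algebra_simps)
  ultimately have "f (x + h *\<^sub>R e + h *\<^sub>R d) - f (x + h *\<^sub>R e) - f (x + h *\<^sub>R d) + f x
     = h * h * partial j (partial i f) (x + \<sigma> *\<^sub>R e + \<tau> *\<^sub>R d)"
    using eq1 eq2 by (metis mult.assoc)
  then show ?thesis using s t unfolding e_def d_def by blast
qed

lemma clairaut:
  fixes f :: "real^'n \<Rightarrow> real"
  assumes df: "\<And>y. f differentiable at y"
    and di: "\<And>y. partial i f differentiable at y"
    and dj: "\<And>y. partial j f differentiable at y"
    and ci: "isCont (partial j (partial i f)) x"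
    and cj: "isCont (partial i (partial j f)) x"
  shows "partial j (partial i f) x = partial i (partial j f) x"
proof (rule ccontr)
  assume ne: "partial j (partial i f) x \<noteq> partial i (partial j f) x"
  define \<epsilon> where "\<epsilon> = \<bar>partial j (partial i f) x - partial i (partial j f) x\<bar> / 2"
  have ep: "\<epsilon> > 0" using ne unfolding \<epsilon>_def by auto
  obtain \<delta>1 where d1: "\<delta>1 > 0" "\<And>y. dist y x < \<delta>1 \<Longrightarrow> dist (partial j (partial i f) y) (partial j (partial i f) x) < \<epsilon>"
    using ci ep unfolding continuous_at_eps_delta by blast
  obtain \<delta>2 where d2: "\<delta>2 > 0" "\<And>y. dist y x < \<delta>2 \<Longrightarrow> dist (partial i (partial j f) y) (partial i (partial j f) x) < \<epsilon>"
    using cj ep unfolding continuous_at_eps_delta by blast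
  define h where "h = min \<delta>1 \<delta>2 / 2"
  have h: "h > 0" "2 * h \<le> \<delta>1" "2 * h \<le> \<delta>2" using d1 d2 unfolding h_def by auto
  obtain \<sigma> \<tau> where st: "0 < \<sigma>" "\<sigma> < h" "0 < \<tau>" "\<tau> < h" and
    E1: "f (x + h *\<^sub>R axis i 1 + h *\<^sub>R axis j 1) - f (x + h *\<^sub>R axis i 1) - f (x + h *\<^sub>R axis j 1) + f x
     = h * h * partial j (partial i f) (x + \<sigma> *\<^sub>R axis i 1 + \<tau> *\<^sub>R axis j 1)"
    using mvt_mixed[OF df di h(1)] by blast
  obtain \<sigma>' \<tau>' where st': "0 < \<sigma>'" "\<sigma>' < h" "0 < \<tau>'" "\<tau>' < h" and
    E2: "f (x + h *\<^sub>R axis j 1 + h *\<^sub>R axis i 1) - f (x + h *\<^sub>R axis j 1) - f (x + h *\<^sub>R axis i 1) + f x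
     = h * h * partial i (partial j f) (x + \<sigma>' *\<^sub>R axis j 1 + \<tau>' *\<^sub>R axis i 1)"
    using mvt_mixed[OF df dj h(1)] by blast
  have xx: "x + h *\<^sub>R axis j 1 + h *\<^sub>R axis i 1 = x + h *\<^sub>R axis i 1 + h *\<^sub>R axis j 1"
    by (simp add: algebra_simps)
  have "h * h * partial j (partial i f) (x + \<sigma> *\<^sub>R axis i 1 + \<tau> *\<^sub>R axis j 1)
      = h * h * partial i (partial j f) (x + \<sigma>' *\<^sub>R axis j 1 + \<tau>' *\<^sub>R axis i 1)"
    using E1 E2 unfolding xx by linarith
  then have E: "partial j (partial i f) (x + \<sigma> *\<^sub>R axis i 1 + \<tau> *\<^sub>R axis j 1)
      = partial i (partial j f) (x + \<sigma>' *\<^sub>R axis j 1 + \<tau>' *\<^sub>R axis i 1)"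
    using h(1) by simp
  have nb: "dist (x + a *\<^sub>R axis k 1 + b *\<^sub>R axis l 1) x < 2 * h"
    if "0 < a" "a < h" "0 < b" "b < h" for a b and k l :: 'n
  proof -
    have "dist (x + a *\<^sub>R axis k 1 + b *\<^sub>R axis l 1) x = norm (a *\<^sub>R axis k 1 + b *\<^sub>R axis l 1 :: real^'n)"
      by (simp add: dist_norm add.assoc)
    also have "\<dots> \<le> norm (a *\<^sub>R axis k 1 :: real^'n) + norm (b *\<^sub>R axis l 1 :: real^'n)"
      by (rule norm_triangle_ineq)
    also have "\<dots> = a + b" using that by (simp add: norm_axis_1)
    finally show ?thesis using that by simp
  qed
  have a1: "dist (partial j (partial i f) (x + \<sigma> *\<^sub>R axis i 1 + \<tau> *\<^sub>R axis j 1)) (partial j (partial i f) x) < \<epsilon>"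
    using nb[OF st, of i j] h by (intro d1(2)) linarith
  have a2: "dist (partial i (partial j f) (x + \<sigma>' *\<^sub>R axis j 1 + \<tau>' *\<^sub>R axis i 1)) (partial i (partial j f) x) < \<epsilon>"
    using nb[OF st', of j i] h by (intro d2(2)) linarith
  have absurd: "\<bar>A - C\<bar> < \<bar>C - D\<bar> / 2 \<Longrightarrow> \<bar>B - D\<bar> < \<bar>C - D\<bar> / 2 \<Longrightarrow> A = B \<Longrightarrow> False"
    for A B C D :: real by (simp add: abs_if split: if_splits)
  show False using absurd[OF a1[unfolded \<epsilon>_def dist_real_def] a2[unfolded \<epsilon>_def dist_real_def] E] .
qed


lemma comp_fst:
  fixes g :: "real^'n \<Rightarrow> real" and w :: "real^'n"
  assumes "g differentiable at q"
  shows "((\<lambda>p. g (fst p)) has_derivative (\<lambda>h. \<Sum>k\<in>UNIV. partial k g q * fst h $ k)) (at (q, w))"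
proof -
  have f: "(fst has_derivative fst) (at (q, w))" by (rule has_derivative_fst[OF has_derivative_ident])
  have "((\<lambda>v. g v) has_derivative (\<lambda>v. \<Sum>k\<in>UNIV. partial k g q * v $ k)) (at (fst (q, w)))"
    using differentiable_sum_form[OF assms] by simp
  from diff_chain_at[OF f this] show ?thesis by (simp add: o_def)
qed

lemma comp_snd:
  fixes q w :: "real^'n"
  shows "((\<lambda>p::(real^'n) \<times> (real^'n). snd p $ j) has_derivative (\<lambda>h. snd h $ j)) (at (q, w))"
proof -
  have "bounded_linear (\<lambda>h::(real^'n) \<times> (real^'n). snd h $ j)"
    by (rule bounded_linear_compose[OF bounded_linear_vec_nth bounded_linear_snd])
  then show ?thesis by (rule bounded_linear.has_derivative[OF _ has_derivative_ident])
qed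

lemma smooth_diff:
  fixes F :: "real^'n \<Rightarrow> real"
  assumes "smooth_fun F"
  shows "F differentiable at y" "partial a F differentiable at y"
    "partial a (partial b F) differentiable at y"
    "partial a (partial b (partial c F)) differentiable at y"
proof -
  have "\<And>is. iter_partial is F differentiable at y"
    using assms unfolding smooth_fun_def differentiable_on_def by auto
  from this[of "[]"] this[of "[a]"] this[of "[a,b]"] this[of "[a,b,c]"]
  show "F differentiable at y" "partial a F differentiable at y"
    "partial a (partial b F) differentiable at y"
    "partial a (partial b (partial c F)) differentiable at y"
    by (simp_all add: iter_partial_def)
qed

lemma eqP_lemma: "Psi_map (F::real^'n \<Rightarrow> real) = (\<lambda>p. (fst p + snd p, \<chi> i. partial i F (fst p) +
      (\<Sum>j\<in>UNIV. partial i (partial j F) (fst p) * snd p $ j)))"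
  proof (rule ext)
    fix p :: "(real^'n) \<times> (real^'n)"
    obtain a b where p: "p = (a, b)" by (cases p)
    have h: "hessian F a *v b = (\<chi> i. \<Sum>j\<in>UNIV. partial i (partial j F) a * b $ j)"
      unfolding hessian_def matrix_vector_mult_def by simp
    have "Psi_map F (a, b) = (a + b, grad F a + hessian F a *v b)"
      unfolding Psi_map_def by simp
    also have "\<dots> = (a + b, \<chi> i. partial i F a + (\<Sum>j\<in>UNIV. partial i (partial j F) a * b $ j))"
      unfolding h grad_def by (simp add: vec_eq_iff)
    finally show "Psi_map F p = (fst p + snd p, \<chi> i. partial i F (fst p) +
      (\<Sum>j\<in>UNIV. partial i (partial j F) (fst p) * snd p $ j))"
      unfolding p by simp
  qed

lemma ci_lemma:
  fixes F :: "real^'n \<Rightarrow> real"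
  assumes sm: "smooth_fun F"
  shows "((\<lambda>p. partial i F (fst p) +
      (\<Sum>j\<in>UNIV. partial i (partial j F) (fst p) * snd p $ j)) has_derivative
      (\<lambda>h. (\<Sum>k\<in>UNIV. partial k (partial i F) q * fst h $ k) +
        (\<Sum>j\<in>UNIV. partial i (partial j F) q * snd h $ j +
           (\<Sum>k\<in>UNIV. partial k (partial i (partial j F)) q * fst h $ k) * w $ j))) (at (q, w))"
proof (rule has_derivative_add)
  show "((\<lambda>p. partial i F (fst p)) has_derivative (\<lambda>h. \<Sum>k\<in>UNIV. partial k (partial i F) q * fst h $ k)) (at (q, w))"
    by (rule comp_fst[OF smooth_diff(2)[OF sm]])
  show "((\<lambda>p. \<Sum>j\<in>UNIV. partial i (partial j F) (fst p) * snd p $ j) has_derivative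
    (\<lambda>h. \<Sum>j\<in>UNIV. partial i (partial j F) q * snd h $ j +
         (\<Sum>k\<in>UNIV. partial k (partial i (partial j F)) q * fst h $ k) * w $ j)) (at (q, w))"
  proof (rule has_derivative_sum)
    fix j
    have m: "((\<lambda>p. partial i (partial j F) (fst p) * snd p $ j) has_derivative
      (\<lambda>h. partial i (partial j F) (fst (q, w)) * snd h $ j +
         (\<Sum>k\<in>UNIV. partial k (partial i (partial j F)) q * fst h $ k) * snd (q, w) $ j)) (at (q, w))"
      by (rule has_derivative_mult[OF comp_fst[OF smooth_diff(3)[OF sm, where y=q and a=i and b=j], where w=w] comp_snd[of j q w]])
    show "((\<lambda>p. partial i (partial j F) (fst p) * snd p $ j) has_derivative
      (\<lambda>h. partial i (partial j F) q * snd h $ j +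
         (\<Sum>k\<in>UNIV. partial k (partial i (partial j F)) q * fst h $ k) * w $ j)) (at (q, w))"
      using m unfolding fst_conv snd_conv .
  qed
qed

lemma c2_lemma:
  fixes F :: "real^'n \<Rightarrow> real"
  assumes sm: "smooth_fun F"
  shows "((\<lambda>p. \<chi> i. partial i F (fst p) +
      (\<Sum>j\<in>UNIV. partial i (partial j F) (fst p) * snd p $ j)) has_derivative
      (\<lambda>h. \<chi> i. (\<Sum>k\<in>UNIV. partial k (partial i F) q * fst h $ k) +
        (\<Sum>j\<in>UNIV. partial i (partial j F) q * snd h $ j +
           (\<Sum>k\<in>UNIV. partial k (partial i (partial j F)) q * fst h $ k) * w $ j))) (at (q, w))"
proof (rule iffD2[OF has_derivative_componentwise_within], intro ballI)
  fix b :: "real^'n" assume "b \<in> Basis"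
  then obtain i where b: "b = axis i 1" using axis_inverse by blast
  show "((\<lambda>p. (\<chi> i. partial i F (fst p) +
    (\<Sum>j\<in>UNIV. partial i (partial j F) (fst p) * snd p $ j)) \<bullet> b) has_derivative
    (\<lambda>h. (\<chi> i. (\<Sum>k\<in>UNIV. partial k (partial i F) q * fst h $ k) +
      (\<Sum>j\<in>UNIV. partial i (partial j F) q * snd h $ j +
         (\<Sum>k\<in>UNIV. partial k (partial i (partial j F)) q * fst h $ k) * w $ j)) \<bullet> b)) (at (q, w))"
    unfolding b inner_axis vec_lambda_beta inner_real_def mult_1_right
    by (rule ci_lemma[OF sm])
qed

lemma Psi_deriv:
  fixes F :: "real^'n \<Rightarrow> real"
  assumes sm: "smooth_fun F"
  shows "(Psi_map F has_derivative (\<lambda>h. (fst h + snd h,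
     \<chi> i. (\<Sum>k\<in>UNIV. partial k (partial i F) q * fst h $ k) +
        (\<Sum>j\<in>UNIV. partial i (partial j F) q * snd h $ j +
           (\<Sum>k\<in>UNIV. partial k (partial i (partial j F)) q * fst h $ k) * w $ j)))) (at (q, w))"
proof -
  have c1: "((\<lambda>p::(real^'n)\<times>(real^'n). fst p + snd p) has_derivative (\<lambda>h. fst h + snd h)) (at (q, w))"
    by (rule has_derivative_add[OF has_derivative_fst[OF has_derivative_ident] has_derivative_snd[OF has_derivative_ident]])
  show ?thesis unfolding eqP_lemma[of F] by (rule has_derivative_Pair[OF c1 c2_lemma[OF sm]])
qed

lemma linear_third:
  fixes F :: "real^'n \<Rightarrow> real"
  shows "linear (\<lambda>\<zeta>. third_deriv F q \<zeta> w)"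
proof (rule linearI)
  fix x y :: "real^'n" and c :: real
  show "third_deriv F q (x + y) w = third_deriv F q x w + third_deriv F q y w"
    unfolding third_deriv_def vec_eq_iff
    by (simp add: distrib_left distrib_right sum.distrib)
  show "third_deriv F q (c *\<^sub>R x) w = c *\<^sub>R third_deriv F q x w"
    unfolding third_deriv_def vec_eq_iff
    by (simp add: sum_distrib_left mult.assoc mult.left_commute)
qed

lemma surj_iff:
  fixes F :: "real^'n \<Rightarrow> real"
  assumes sm: "smooth_fun F"
  shows "surj (frechet_derivative (Psi_map F) (at (q, w))) \<longleftrightarrow> bij (\<lambda>\<zeta>. third_deriv F q \<zeta> w)"
proof -
  define T where "T = (\<lambda>\<zeta>. third_deriv F q \<zeta> w)"
  define M where "M = (\<lambda>v::real^'n. \<chi> i. \<Sum>k\<in>UNIV. partial i (partial k F) q * v $ k)"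
  define D where "D = (\<lambda>h::(real^'n)\<times>(real^'n). (fst h + snd h,
     \<chi> i. (\<Sum>k\<in>UNIV. partial k (partial i F) q * fst h $ k) +
        (\<Sum>j\<in>UNIV. partial i (partial j F) q * snd h $ j +
           (\<Sum>k\<in>UNIV. partial k (partial i (partial j F)) q * fst h $ k) * w $ j)))"
  have fd: "frechet_derivative (Psi_map F) (at (q, w)) = D"
    using frechet_derivative_at[OF Psi_deriv[OF sm, of q w]] unfolding D_def by simp
  have cont: "isCont (partial a (partial b g)) y"
    if "\<And>y. partial a (partial b g) differentiable at y" for a b g and y :: "real^'n"
    using differentiable_imp_continuous_within[OF that] .
  have ic2: "isCont (partial a (partial b F)) y" for a b y
    by (rule differentiable_imp_continuous_within[OF smooth_diff(3)[OF sm]])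
  have ic3: "isCont (partial a (partial b (partial c F))) y" for a b c y
    by (rule differentiable_imp_continuous_within[OF smooth_diff(4)[OF sm]])
  have S1: "partial k (partial i F) q = partial i (partial k F) q" for i k
    by (rule clairaut[of F i k q]) (rule smooth_diff[OF sm] ic2)+
  have S2: "partial k (partial i (partial j F)) q = partial i (partial k (partial j F)) q" for i j k
    by (rule clairaut[of "partial j F" i k q]) (rule smooth_diff[OF sm] ic3)+
  have Dform: "D (a, b) = (a + b, M (a + b) + T a)" for a b
  proof -
    have e2: "(\<Sum>j\<in>UNIV. (\<Sum>k\<in>UNIV. partial k (partial i (partial j F)) q * a $ k) * w $ j)
        = (\<Sum>k\<in>UNIV. \<Sum>j\<in>UNIV. partial i (partial k (partial j F)) q * a $ k * w $ j)" for i
    proof -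
      have "(\<Sum>j\<in>UNIV. (\<Sum>k\<in>UNIV. partial k (partial i (partial j F)) q * a $ k) * w $ j)
         = (\<Sum>j\<in>UNIV. \<Sum>k\<in>UNIV. partial i (partial k (partial j F)) q * a $ k * w $ j)"
        unfolding S2 by (simp add: sum_distrib_right)
      also have "\<dots> = (\<Sum>k\<in>UNIV. \<Sum>j\<in>UNIV. partial i (partial k (partial j F)) q * a $ k * w $ j)"
        by (rule sum.swap)
      finally show ?thesis .
    qed
    have e1: "(\<Sum>k\<in>UNIV. partial k (partial i F) q * a $ k) = (\<Sum>k\<in>UNIV. partial i (partial k F) q * a $ k)" for i
      unfolding S1 ..
    have e3: "(\<Sum>k\<in>UNIV. partial i (partial k F) q * a $ k) + (\<Sum>j\<in>UNIV. partial i (partial j F) q * b $ j)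
       = (\<Sum>k\<in>UNIV. partial i (partial k F) q * (a + b) $ k)" for i
      by (simp add: sum.distrib[symmetric] distrib_left)
    show ?thesis
      unfolding D_def M_def T_def third_deriv_def fst_conv snd_conv prod.inject
    proof (intro conjI refl)
      show "(\<chi> i. (\<Sum>k\<in>UNIV. partial k (partial i F) q * a $ k) +
        (\<Sum>j\<in>UNIV. partial i (partial j F) q * b $ j +
           (\<Sum>k\<in>UNIV. partial k (partial i (partial j F)) q * a $ k) * w $ j)) =
        (\<chi> i. \<Sum>k\<in>UNIV. partial i (partial k F) q * (a + b) $ k) +
        (\<chi> k. \<Sum>i\<in>UNIV. \<Sum>j\<in>UNIV. partial k (partial i (partial j F)) q * a $ i * w $ j)"
        unfolding vec_eq_iff
      proof
        fix i
        show "(\<chi> i. (\<Sum>k\<in>UNIV. partial k (partial i F) q * a $ k) +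
          (\<Sum>j\<in>UNIV. partial i (partial j F) q * b $ j +
           (\<Sum>k\<in>UNIV. partial k (partial i (partial j F)) q * a $ k) * w $ j)) $ i =
          ((\<chi> i. \<Sum>k\<in>UNIV. partial i (partial k F) q * (a + b) $ k) +
          (\<chi> k. \<Sum>i\<in>UNIV. \<Sum>j\<in>UNIV. partial k (partial i (partial j F)) q * a $ i * w $ j)) $ i"
          using e1[of i] e2[of i] e3[of i] by (simp add: sum.distrib)
      qed
    qed
  qed
  have lin: "linear T" unfolding T_def by (rule linear_third)
  have M0: "M 0 = 0" unfolding M_def by (simp add: vec_eq_iff)
  have "surj D \<longleftrightarrow> surj T"
  proof
    assume sD: "surj D"
    show "surj T"
    proof (rule surjI[where f = "\<lambda>b. fst (inv D (0, b))"])
      fix b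
      define x where "x = inv D (0, b)"
      have "D (fst x, snd x) = (0, b)" using sD by (simp add: x_def surj_f_inv_f)
      then have "(fst x + snd x, M (fst x + snd x) + T (fst x)) = (0, b)" by (simp only: Dform)
      then have e: "fst x + snd x = 0 \<and> M (fst x + snd x) + T (fst x) = b"
        by (rule iffD1[OF prod.inject])
      have e1: "fst x + snd x = 0" using e by (rule conjunct1)
      have e2: "M (fst x + snd x) + T (fst x) = b" using e by (rule conjunct2)
      have "M 0 + T (fst x) = b" using e2 unfolding e1 .
      then show "T (fst (inv D (0, b))) = b" unfolding M0 x_def by simp
    qed
  next
    assume sT: "surj T"
    show "surj D"
    proof (rule surjI[where f = "\<lambda>p. (inv T (snd p - M (fst p)), fst p - inv T (snd p - M (fst p)))"])
      fix p :: "(real^'n)\<times>(real^'n)"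
      show "D (inv T (snd p - M (fst p)), fst p - inv T (snd p - M (fst p))) = p"
        unfolding Dform using sT by (simp add: surj_f_inv_f)
    qed
  qed
  moreover have "surj T \<longleftrightarrow> bij T"
    using linear_surj_imp_inj[OF lin] by (auto simp: bij_def)
  ultimately show ?thesis unfolding fd T_def by simp
qed

theorem mainTheorem17:
  fixes F :: "real^'n \<Rightarrow> real"
  assumes "smooth_fun F"
  shows "critical_points (Psi_map F) =
           {(q, w). \<not> bij (\<lambda>\<zeta>. third_deriv F q \<zeta> w)}
         \<and> (\<forall>q w. Psi_map F (q, w) \<in> Psi_map F ` critical_points (Psi_map F) \<longleftrightarrow>
              (\<exists>q' w'. Psi_map F (q', w') = Psi_map F (q, w) \<and>
                 \<not> bij (\<lambda>\<zeta>. third_deriv F q' \<zeta> w')))"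
proof -
  have C: "critical_points (Psi_map F) = {(q, w). \<not> bij (\<lambda>\<zeta>. third_deriv F q \<zeta> w)}"
  proof (rule set_eqI)
    fix p :: "(real^'n) \<times> (real^'n)"
    obtain q w where p: "p = (q, w)" by (cases p)
    show "p \<in> critical_points (Psi_map F) \<longleftrightarrow> p \<in> {(q, w). \<not> bij (\<lambda>\<zeta>. third_deriv F q \<zeta> w)}"
      unfolding critical_points_def p mem_Collect_eq case_prod_conv surj_iff[OF assms] ..
  qed
  show ?thesis
  proof (intro conjI allI)
    show "critical_points (Psi_map F) = {(q, w). \<not> bij (\<lambda>\<zeta>. third_deriv F q \<zeta> w)}" by (rule C)
    fix q w
    show "Psi_map F (q, w) \<in> Psi_map F ` critical_points (Psi_map F) \<longleftrightarrow>
              (\<exists>q' w'. Psi_map F (q', w') = Psi_map F (q, w) \<and>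
                 \<not> bij (\<lambda>\<zeta>. third_deriv F q' \<zeta> w'))"
    proof
      assume "Psi_map F (q, w) \<in> Psi_map F ` critical_points (Psi_map F)"
      then obtain p where p: "p \<in> critical_points (Psi_map F)" "Psi_map F (q, w) = Psi_map F p"
        by blast
      obtain q' w' where pq: "p = (q', w')" by (cases p)
      have "\<not> bij (\<lambda>\<zeta>. third_deriv F q' \<zeta> w')" using p(1) unfolding C pq by simp
      then show "\<exists>q' w'. Psi_map F (q', w') = Psi_map F (q, w) \<and> \<not> bij (\<lambda>\<zeta>. third_deriv F q' \<zeta> w')"
        using p(2) unfolding pq by metis
    next
      assume "\<exists>q' w'. Psi_map F (q', w') = Psi_map F (q, w) \<and> \<not> bij (\<lambda>\<zeta>. third_deriv F q' \<zeta> w')"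
      then obtain q' w' where e: "Psi_map F (q', w') = Psi_map F (q, w)"
        and nb: "\<not> bij (\<lambda>\<zeta>. third_deriv F q' \<zeta> w')" by blast
      have "(q', w') \<in> critical_points (Psi_map F)" unfolding C using nb by simp
      then show "Psi_map F (q, w) \<in> Psi_map F ` critical_points (Psi_map F)"
        using e by (metis image_eqI)
    qed
  qed
qed

end
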